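(* Let $A$ be a category with a variance $(E,M)$ and let $C$ be a category. For every functor $F\colon A\rightarrow C$ of variance $(E,M)$, the restriction $F|_E$ is a covariant functor $E\rightarrow C$, the restriction $F|_M$ is a contravariant functor $M\rightarrow C$, and $(F|_E,F|_M)$ is a compatible pair. Moreover, the assignment $F\mapsto (F|_E,F|_M)$ is a bijection from the functors $A\rightarrow C$ of variance $(E,M)$ onto the compatible pairs $(G\colon E\rightarrow C,\ H\colon M\rightarrow C)$.
   Context: A strict factorization system on a category $A$ is a pair $(E,M)$ of subcategories of $A$, both containing all objects of $A$, such that every morphism $f$ of $A$ factors uniquely as $f=me$ with $e$ in $E$ and $m$ in $M$. A variance on $A$ is a pair $(E,M)$ such that both $(E,M)$ and $(M,E)$ are strict factorization systems. For $f\colon x\rightarrow y$ in $A$ write $f=f^m f^e$ with $f^e\colon x\rightarrow f_t$ in $E$, $f^m\colon f_t\rightarrow y$ in $M$, and $f=f_e f_m$ with $f_m\colon x\rightarrow f_s$ in $M$, $f_e\colon f_s\rightarrow y$ in $E$. (For $f$ in $E$: $f_s=x$, $f_t=y$; for $f$ in $M$: $f_s=y$, $f_t=x$.) A functor $F\colon A\rightarrow C$ of variance $(E,M)$ consists of a function $F$ on objects and a function $F$ on morphisms such that: $F$ sends identities to identities; for every morphism $f$ of $A$, $F(f)$ is a morphism $F(f_s)\rightarrow F(f_t)$; and for all composable morphisms $x\xrightarrow{f}y\xrightarrow{g}z$ of $A$, $$F(gf)=F((g^ef^m)^e)\,F(f)\,F((g_mf_e)_m)\quad\text{and}\quad F(gf)=F((g^ef^m)^m)\,F(g)\,F((g_mf_e)_e).$$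 A compatible pair consists of a covariant functor $G\colon E\rightarrow C$ and a contravariant functor $H\colon M\rightarrow C$ which agree on objects and satisfy $G(f^e)H(f_m)=H(f^m)G(f_e)$ for every morphism $f$ of $A$. *)

theory Defs
  imports Main "HOL-Library.FuncSet"
begin

text \<open>Categories, given explicitly by objects, morphisms, domain, codomain,
identities and composition.  Comp A g f denotes g after f (defined when Cod f = Dom g).\<close>

record ('o, 'm) cat =
  Obj  :: "'o set"
  Mor  :: "'m set"
  Dom  :: "'m \<Rightarrow> 'o"
  Cod  :: "'m \<Rightarrow> 'o"
  Idm  :: "'o \<Rightarrow> 'm"
  Comp :: "'m \<Rightarrow> 'm \<Rightarrow> 'm"

definition is_category :: "('o, 'm) cat \<Rightarrow> bool" where
  "is_category A \<longleftrightarrow>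
     (\<forall>f\<in>Mor A. Dom A f \<in> Obj A \<and> Cod A f \<in> Obj A) \<and>
     (\<forall>x\<in>Obj A. Idm A x \<in> Mor A \<and> Dom A (Idm A x) = x \<and> Cod A (Idm A x) = x) \<and>
     (\<forall>f\<in>Mor A. \<forall>g\<in>Mor A. Cod A f = Dom A g \<longrightarrow>
        Comp A g f \<in> Mor A \<and> Dom A (Comp A g f) = Dom A f \<and> Cod A (Comp A g f) = Cod A g) \<and>
     (\<forall>f\<in>Mor A. Comp A f (Idm A (Dom A f)) = f \<and> Comp A (Idm A (Cod A f)) f = f) \<and>
     (\<forall>f\<in>Mor A. \<forall>g\<in>Mor A. \<forall>h\<in>Mor A. Cod A f = Dom A g \<longrightarrow> Cod A g = Dom A h \<longrightarrow>
        Comp A h (Comp A g f) = Comp A (Comp A h g) f)"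

definition wide_subcat :: "('o, 'm) cat \<Rightarrow> 'm set \<Rightarrow> bool" where
  "wide_subcat A S \<longleftrightarrow> S \<subseteq> Mor A \<and> (\<forall>x\<in>Obj A. Idm A x \<in> S) \<and>
     (\<forall>f\<in>S. \<forall>g\<in>S. Cod A f = Dom A g \<longrightarrow> Comp A g f \<in> S)"

definition is_fact :: "('o, 'm) cat \<Rightarrow> 'm set \<Rightarrow> 'm set \<Rightarrow> 'm \<Rightarrow> 'm \<Rightarrow> 'm \<Rightarrow> bool" where
  "is_fact A X Y f e m \<longleftrightarrow> e \<in> X \<and> m \<in> Y \<and> Cod A e = Dom A m \<and> Comp A m e = f"

definition strict_fact_system :: "('o, 'm) cat \<Rightarrow> 'm set \<Rightarrow> 'm set \<Rightarrow> bool" where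
  "strict_fact_system A X Y \<longleftrightarrow> wide_subcat A X \<and> wide_subcat A Y \<and>
     (\<forall>f\<in>Mor A. \<exists>!p. is_fact A X Y f (fst p) (snd p))"

definition variance :: "('o, 'm) cat \<Rightarrow> 'm set \<Rightarrow> 'm set \<Rightarrow> bool" where
  "variance A E M \<longleftrightarrow> strict_fact_system A E M \<and> strict_fact_system A M E"

definition fst_fac :: "('o, 'm) cat \<Rightarrow> 'm set \<Rightarrow> 'm set \<Rightarrow> 'm \<Rightarrow> 'm" where
  "fst_fac A X Y f = fst (THE p. is_fact A X Y f (fst p) (snd p))"

definition snd_fac :: "('o, 'm) cat \<Rightarrow> 'm set \<Rightarrow> 'm set \<Rightarrow> 'm \<Rightarrow> 'm" where
  "snd_fac A X Y f = snd (THE p. is_fact A X Y f (fst p) (snd p))"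

text \<open>Notation of the paper: f = f^m f^e (E,M) and f = f_e f_m (M,E).\<close>
definition up_e :: "('o, 'm) cat \<Rightarrow> 'm set \<Rightarrow> 'm set \<Rightarrow> 'm \<Rightarrow> 'm" where
  "up_e A E M f = fst_fac A E M f"
definition up_m :: "('o, 'm) cat \<Rightarrow> 'm set \<Rightarrow> 'm set \<Rightarrow> 'm \<Rightarrow> 'm" where
  "up_m A E M f = snd_fac A E M f"
definition lo_m :: "('o, 'm) cat \<Rightarrow> 'm set \<Rightarrow> 'm set \<Rightarrow> 'm \<Rightarrow> 'm" where
  "lo_m A E M f = fst_fac A M E f"
definition lo_e :: "('o, 'm) cat \<Rightarrow> 'm set \<Rightarrow> 'm set \<Rightarrow> 'm \<Rightarrow> 'm" where
  "lo_e A E M f = snd_fac A M E f"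

definition f_t :: "('o, 'm) cat \<Rightarrow> 'm set \<Rightarrow> 'm set \<Rightarrow> 'm \<Rightarrow> 'o" where
  "f_t A E M f = Cod A (up_e A E M f)"
definition f_s :: "('o, 'm) cat \<Rightarrow> 'm set \<Rightarrow> 'm set \<Rightarrow> 'm \<Rightarrow> 'o" where
  "f_s A E M f = Cod A (lo_m A E M f)"

definition var_functor ::
  "('o, 'm) cat \<Rightarrow> 'm set \<Rightarrow> 'm set \<Rightarrow> ('p, 'n) cat \<Rightarrow> ('o \<Rightarrow> 'p) \<Rightarrow> ('m \<Rightarrow> 'n) \<Rightarrow> bool" where
  "var_functor A E M C Fo Fm \<longleftrightarrow>
     (\<forall>x\<in>Obj A. Fo x \<in> Obj C) \<and>
     (\<forall>x\<in>Obj A. Fm (Idm A x) = Idm C (Fo x)) \<and>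
     (\<forall>f\<in>Mor A. Fm f \<in> Mor C \<and> Dom C (Fm f) = Fo (f_s A E M f) \<and> Cod C (Fm f) = Fo (f_t A E M f)) \<and>
     (\<forall>f\<in>Mor A. \<forall>g\<in>Mor A. Cod A f = Dom A g \<longrightarrow>
        Fm (Comp A g f) =
          Comp C (Fm (up_e A E M (Comp A (up_e A E M g) (up_m A E M f))))
            (Comp C (Fm f) (Fm (lo_m A E M (Comp A (lo_m A E M g) (lo_e A E M f))))) \<and>
        Fm (Comp A g f) =
          Comp C (Fm (up_m A E M (Comp A (up_e A E M g) (up_m A E M f))))
            (Comp C (Fm g) (Fm (lo_e A E M (Comp A (lo_m A E M g) (lo_e A E M f))))))"

definition cov_functor_on ::
  "('o, 'm) cat \<Rightarrow> 'm set \<Rightarrow> ('p, 'n) cat \<Rightarrow> ('o \<Rightarrow> 'p) \<Rightarrow> ('m \<Rightarrow> 'n) \<Rightarrow> bool" where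
  "cov_functor_on A S C Fo G \<longleftrightarrow>
     (\<forall>x\<in>Obj A. Fo x \<in> Obj C) \<and>
     (\<forall>x\<in>Obj A. G (Idm A x) = Idm C (Fo x)) \<and>
     (\<forall>f\<in>S. G f \<in> Mor C \<and> Dom C (G f) = Fo (Dom A f) \<and> Cod C (G f) = Fo (Cod A f)) \<and>
     (\<forall>f\<in>S. \<forall>g\<in>S. Cod A f = Dom A g \<longrightarrow> G (Comp A g f) = Comp C (G g) (G f))"

definition contra_functor_on ::
  "('o, 'm) cat \<Rightarrow> 'm set \<Rightarrow> ('p, 'n) cat \<Rightarrow> ('o \<Rightarrow> 'p) \<Rightarrow> ('m \<Rightarrow> 'n) \<Rightarrow> bool" where
  "contra_functor_on A S C Fo H \<longleftrightarrow>
     (\<forall>x\<in>Obj A. Fo x \<in> Obj C) \<and>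
     (\<forall>x\<in>Obj A. H (Idm A x) = Idm C (Fo x)) \<and>
     (\<forall>f\<in>S. H f \<in> Mor C \<and> Dom C (H f) = Fo (Cod A f) \<and> Cod C (H f) = Fo (Dom A f)) \<and>
     (\<forall>f\<in>S. \<forall>g\<in>S. Cod A f = Dom A g \<longrightarrow> H (Comp A g f) = Comp C (H f) (H g))"

definition compatible_pair ::
  "('o, 'm) cat \<Rightarrow> 'm set \<Rightarrow> 'm set \<Rightarrow> ('p, 'n) cat \<Rightarrow> ('o \<Rightarrow> 'p) \<Rightarrow> ('m \<Rightarrow> 'n) \<Rightarrow> ('m \<Rightarrow> 'n) \<Rightarrow> bool" where
  "compatible_pair A E M C Fo G H \<longleftrightarrow>
     cov_functor_on A E C Fo G \<and> contra_functor_on A M C Fo H \<and>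
     (\<forall>f\<in>Mor A. Comp C (G (up_e A E M f)) (H (lo_m A E M f)) =
                 Comp C (H (up_m A E M f)) (G (lo_e A E M f)))"

text \<open>Extensional representatives (functions determined by their values on the relevant domains).\<close>
definition var_functors ::
  "('o, 'm) cat \<Rightarrow> 'm set \<Rightarrow> 'm set \<Rightarrow> ('p, 'n) cat \<Rightarrow> (('o \<Rightarrow> 'p) \<times> ('m \<Rightarrow> 'n)) set" where
  "var_functors A E M C = {(Fo, Fm). var_functor A E M C Fo Fm \<and>
      Fo \<in> extensional (Obj A) \<and> Fm \<in> extensional (Mor A)}"

definition compatible_pairs ::
  "('o, 'm) cat \<Rightarrow> 'm set \<Rightarrow> 'm set \<Rightarrow> ('p, 'n) cat \<Rightarrow> (('o \<Rightarrow> 'p) \<times> ('m \<Rightarrow> 'n) \<times> ('m \<Rightarrow> 'n)) set" where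
  "compatible_pairs A E M C = {(Fo, G, H). compatible_pair A E M C Fo G H \<and>
      Fo \<in> extensional (Obj A) \<and> G \<in> extensional E \<and> H \<in> extensional M}"

definition restrict_pair ::
  "'m set \<Rightarrow> 'm set \<Rightarrow> ('o \<Rightarrow> 'p) \<times> ('m \<Rightarrow> 'n) \<Rightarrow> ('o \<Rightarrow> 'p) \<times> ('m \<Rightarrow> 'n) \<times> ('m \<Rightarrow> 'n)" where
  "restrict_pair E M F = (fst F, restrict (snd F) E, restrict (snd F) M)"

end

theory Submission
  imports Defs
begin



lemma catD:
  assumes "is_category A"
  shows "f \<in> Mor A \<Longrightarrow> Dom A f \<in> Obj A"
    and "f \<in> Mor A \<Longrightarrow> Cod A f \<in> Obj A"
    and "x \<in> Obj A \<Longrightarrow> Idm A x \<in> Mor A"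
    and "x \<in> Obj A \<Longrightarrow> Dom A (Idm A x) = x"
    and "x \<in> Obj A \<Longrightarrow> Cod A (Idm A x) = x"
    and "f \<in> Mor A \<Longrightarrow> g \<in> Mor A \<Longrightarrow> Cod A f = Dom A g \<Longrightarrow> Comp A g f \<in> Mor A"
    and "f \<in> Mor A \<Longrightarrow> g \<in> Mor A \<Longrightarrow> Cod A f = Dom A g \<Longrightarrow> Dom A (Comp A g f) = Dom A f"
    and "f \<in> Mor A \<Longrightarrow> g \<in> Mor A \<Longrightarrow> Cod A f = Dom A g \<Longrightarrow> Cod A (Comp A g f) = Cod A g"
    and "f \<in> Mor A \<Longrightarrow> Comp A f (Idm A (Dom A f)) = f"
    and "f \<in> Mor A \<Longrightarrow> Comp A (Idm A (Cod A f)) f = f"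
    and "f \<in> Mor A \<Longrightarrow> g \<in> Mor A \<Longrightarrow> h \<in> Mor A \<Longrightarrow> Cod A f = Dom A g \<Longrightarrow> Cod A g = Dom A h \<Longrightarrow>
        Comp A h (Comp A g f) = Comp A (Comp A h g) f"
  using assms unfolding is_category_def by blast+

lemma cat_idid:
  assumes "is_category A" "x \<in> Obj A"
  shows "Comp A (Idm A x) (Idm A x) = Idm A x"
  using catD(9)[OF assms(1) catD(3)[OF assms]] catD(4)[OF assms] by simp

lemma sfs_fact:
  assumes "strict_fact_system A X Y" "f \<in> Mor A"
  shows "is_fact A X Y f (fst_fac A X Y f) (snd_fac A X Y f)"
proof -
  have "\<exists>!p. is_fact A X Y f (fst p) (snd p)" using assms unfolding strict_fact_system_def by blast
  hence "is_fact A X Y f (fst (THE p. is_fact A X Y f (fst p) (snd p))) (snd (THE p. is_fact A X Y f (fst p) (snd p)))"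
    by (rule theI')
  thus ?thesis by (simp add: fst_fac_def snd_fac_def)
qed

lemma sfs_uniq:
  assumes "strict_fact_system A X Y" "f \<in> Mor A" "is_fact A X Y f e m"
  shows "fst_fac A X Y f = e \<and> snd_fac A X Y f = m"
proof -
  have "\<exists>!p. is_fact A X Y f (fst p) (snd p)" using assms unfolding strict_fact_system_def by blast
  hence "(THE p. is_fact A X Y f (fst p) (snd p)) = (e, m)"
    by (rule the1_equality) (use assms(3) in simp)
  thus ?thesis by (simp add: fst_fac_def snd_fac_def)
qed

locale vctx =
  fixes A :: "('o, 'm) cat" and C :: "('p, 'n) cat" and E M :: "'m set"
  assumes cA: "is_category A" and cC: "is_category C" and var: "variance A E M"
begin

lemmas A = catD[OF cA]
lemmas CC = catD[OF cC]

lemma sEM: "strict_fact_system A E M" and sME: "strict_fact_system A M E"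
  using var unfolding variance_def by auto

lemma wE: "wide_subcat A E" and wM: "wide_subcat A M"
  using sEM unfolding strict_fact_system_def by auto

lemma E_mor: "f \<in> E \<Longrightarrow> f \<in> Mor A" and M_mor: "f \<in> M \<Longrightarrow> f \<in> Mor A"
  and E_id: "x \<in> Obj A \<Longrightarrow> Idm A x \<in> E" and M_id: "x \<in> Obj A \<Longrightarrow> Idm A x \<in> M"
  and E_comp: "f \<in> E \<Longrightarrow> g \<in> E \<Longrightarrow> Cod A f = Dom A g \<Longrightarrow> Comp A g f \<in> E"
  and M_comp: "f \<in> M \<Longrightarrow> g \<in> M \<Longrightarrow> Cod A f = Dom A g \<Longrightarrow> Comp A g f \<in> M"
  using wE wM unfolding wide_subcat_def by blast+

lemma ue: assumes "f \<in> Mor A"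
  shows "up_e A E M f \<in> E" "up_m A E M f \<in> M" "Cod A (up_e A E M f) = Dom A (up_m A E M f)"
    "Comp A (up_m A E M f) (up_e A E M f) = f"
  using sfs_fact[OF sEM assms] unfolding is_fact_def up_e_def up_m_def by auto

lemma lm: assumes "f \<in> Mor A"
  shows "lo_m A E M f \<in> M" "lo_e A E M f \<in> E" "Cod A (lo_m A E M f) = Dom A (lo_e A E M f)"
    "Comp A (lo_e A E M f) (lo_m A E M f) = f"
  using sfs_fact[OF sME assms] unfolding is_fact_def lo_m_def lo_e_def by auto

lemma ue_dom: assumes "f \<in> Mor A" shows "Dom A (up_e A E M f) = Dom A f" "Cod A (up_m A E M f) = Cod A f"
  using A(7,8)[OF E_mor[OF ue(1)[OF assms]] M_mor[OF ue(2)[OF assms]] ue(3)[OF assms]] ue(4)[OF assms] by auto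

lemma lm_dom: assumes "f \<in> Mor A" shows "Dom A (lo_m A E M f) = Dom A f" "Cod A (lo_e A E M f) = Cod A f"
  using A(7,8)[OF M_mor[OF lm(1)[OF assms]] E_mor[OF lm(2)[OF assms]] lm(3)[OF assms]] lm(4)[OF assms] by auto

lemma ue_uniq: assumes "e \<in> E" "m \<in> M" "Cod A e = Dom A m"
  shows "up_e A E M (Comp A m e) = e" "up_m A E M (Comp A m e) = m"
proof -
  have "Comp A m e \<in> Mor A" using A(6) E_mor M_mor assms by blast
  from sfs_uniq[OF sEM this] assms show "up_e A E M (Comp A m e) = e" "up_m A E M (Comp A m e) = m"
    unfolding is_fact_def up_e_def up_m_def by auto
qed

lemma lm_uniq: assumes "m \<in> M" "e \<in> E" "Cod A m = Dom A e"
  shows "lo_m A E M (Comp A e m) = m" "lo_e A E M (Comp A e m) = e"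
proof -
  have "Comp A e m \<in> Mor A" using A(6) E_mor M_mor assms by blast
  from sfs_uniq[OF sME this] assms show "lo_m A E M (Comp A e m) = m" "lo_e A E M (Comp A e m) = e"
    unfolding is_fact_def lo_m_def lo_e_def by auto
qed

lemma E_fac: assumes "f \<in> E"
  shows "up_e A E M f = f" "up_m A E M f = Idm A (Cod A f)"
        "lo_m A E M f = Idm A (Dom A f)" "lo_e A E M f = f"
proof -
  have f: "f \<in> Mor A" using E_mor assms .
  have i1: "Idm A (Cod A f) \<in> M" using M_id A(2) f by blast
  have i2: "Idm A (Dom A f) \<in> M" using M_id A(1) f by blast
  have c1: "Cod A f = Dom A (Idm A (Cod A f))" using A(2,4) f by simp
  have c2: "Cod A (Idm A (Dom A f)) = Dom A f" using A(1,5) f by simp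
  show "up_e A E M f = f" "up_m A E M f = Idm A (Cod A f)"
    using ue_uniq[OF assms i1 c1] A(10)[OF f] by auto
  show "lo_m A E M f = Idm A (Dom A f)" "lo_e A E M f = f"
    using lm_uniq[OF i2 assms c2] A(9)[OF f] by auto
qed

lemma M_fac: assumes "f \<in> M"
  shows "up_e A E M f = Idm A (Dom A f)" "up_m A E M f = f"
        "lo_m A E M f = f" "lo_e A E M f = Idm A (Cod A f)"
proof -
  have f: "f \<in> Mor A" using M_mor assms .
  have i1: "Idm A (Cod A f) \<in> E" using E_id A(2) f by blast
  have i2: "Idm A (Dom A f) \<in> E" using E_id A(1) f by blast
  have c1: "Cod A f = Dom A (Idm A (Cod A f))" using A(2,4) f by simp
  have c2: "Cod A (Idm A (Dom A f)) = Dom A f" using A(1,5) f by simp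
  show "up_e A E M f = Idm A (Dom A f)" "up_m A E M f = f"
    using ue_uniq[OF i2 assms c2] A(9)[OF f] by auto
  show "lo_m A E M f = f" "lo_e A E M f = Idm A (Cod A f)"
    using lm_uniq[OF assms i1 c1] A(10)[OF f] by auto
qed

lemma ft_E: "f \<in> E \<Longrightarrow> f_t A E M f = Cod A f" and fs_E: "f \<in> E \<Longrightarrow> f_s A E M f = Dom A f"
  and ft_M: "f \<in> M \<Longrightarrow> f_t A E M f = Dom A f" and fs_M: "f \<in> M \<Longrightarrow> f_s A E M f = Cod A f"
  unfolding f_t_def f_s_def using E_fac M_fac A(1,2,5) E_mor M_mor by auto

end



lemma assoc4:
  assumes "is_category A" "a \<in> Mor A" "b \<in> Mor A" "c \<in> Mor A" "d \<in> Mor A"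
    "Cod A a = Dom A b" "Cod A b = Dom A c" "Cod A c = Dom A d"
  shows "Comp A (Comp A d c) (Comp A b a) = Comp A d (Comp A (Comp A c b) a)"
proof -
  note X = catD[OF assms(1)]
  have "Comp A (Comp A d c) (Comp A b a) = Comp A d (Comp A c (Comp A b a))"
    using X(11)[of "Comp A b a" c d] X(6,8) assms by simp
  also have "Comp A c (Comp A b a) = Comp A (Comp A c b) a"
    using X(11) assms by simp
  finally show ?thesis .
qed

context vctx begin

lemma vfD: assumes "var_functor A E M C Fo Fm"
  shows "x \<in> Obj A \<Longrightarrow> Fo x \<in> Obj C"
    and "x \<in> Obj A \<Longrightarrow> Fm (Idm A x) = Idm C (Fo x)"
    and "f \<in> Mor A \<Longrightarrow> Fm f \<in> Mor C"
    and "f \<in> Mor A \<Longrightarrow> Dom C (Fm f) = Fo (f_s A E M f)"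
    and "f \<in> Mor A \<Longrightarrow> Cod C (Fm f) = Fo (f_t A E M f)"
    and "f \<in> Mor A \<Longrightarrow> g \<in> Mor A \<Longrightarrow> Cod A f = Dom A g \<Longrightarrow>
        Fm (Comp A g f) =
          Comp C (Fm (up_e A E M (Comp A (up_e A E M g) (up_m A E M f))))
            (Comp C (Fm f) (Fm (lo_m A E M (Comp A (lo_m A E M g) (lo_e A E M f)))))"
    and "f \<in> Mor A \<Longrightarrow> g \<in> Mor A \<Longrightarrow> Cod A f = Dom A g \<Longrightarrow>
        Fm (Comp A g f) =
          Comp C (Fm (up_m A E M (Comp A (up_e A E M g) (up_m A E M f))))
            (Comp C (Fm g) (Fm (lo_e A E M (Comp A (lo_m A E M g) (lo_e A E M f)))))"
  using assms unfolding var_functor_def by blast+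

lemma vf_E: assumes "var_functor A E M C Fo Fm" "f \<in> E"
  shows "Dom C (Fm f) = Fo (Dom A f)" "Cod C (Fm f) = Fo (Cod A f)"
  using vfD(4,5)[OF assms(1) E_mor[OF assms(2)]] ft_E fs_E assms(2) by auto

lemma vf_M: assumes "var_functor A E M C Fo Fm" "f \<in> M"
  shows "Dom C (Fm f) = Fo (Cod A f)" "Cod C (Fm f) = Fo (Dom A f)"
  using vfD(4,5)[OF assms(1) M_mor[OF assms(2)]] ft_M fs_M assms(2) by auto

lemma vf_decomp: assumes F: "var_functor A E M C Fo Fm" and f: "f \<in> Mor A"
  shows "Fm f = Comp C (Fm (up_e A E M f)) (Fm (lo_m A E M f))"
    "Fm f = Comp C (Fm (up_m A E M f)) (Fm (lo_e A E M f))"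
proof -
  let ?m = "lo_m A E M f" and ?e = "lo_e A E M f"
  have m: "?m \<in> M" "?m \<in> Mor A" and e: "?e \<in> E" "?e \<in> Mor A" and c: "Cod A ?m = Dom A ?e"
    and fe: "Comp A ?e ?m = f"
    using lm[OF f] M_mor E_mor by auto
  have x: "Cod A ?m \<in> Obj A" using A(2) m by blast
  have ix: "Idm A (Cod A ?m) \<in> M" "Idm A (Cod A ?m) \<in> E" using x M_id E_id by auto
  have ii: "Comp A (Idm A (Cod A ?m)) (Idm A (Cod A ?m)) = Idm A (Cod A ?m)" using cat_idid[OF cA x] .
  have lme: "lo_m A E M ?e = Idm A (Cod A ?m)" using E_fac(3)[OF e(1)] c by simp
  have lem: "lo_e A E M ?m = Idm A (Cod A ?m)" using M_fac(4)[OF m(1)] by simp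
  have lmi: "lo_m A E M (Idm A (Cod A ?m)) = Idm A (Cod A ?m)"
    using M_fac(3)[OF ix(1)] .
  have lei: "lo_e A E M (Idm A (Cod A ?m)) = Idm A (Cod A ?m)"
    using E_fac(4)[OF ix(2)] .
  have Fi: "Fm (Idm A (Cod A ?m)) = Idm C (Fo (Cod A ?m))" using vfD(2)[OF F x] .
  have dm: "Dom C (Fm ?m) = Fo (Cod A ?m)" using vf_M(1)[OF F m(1)] .
  have de: "Dom C (Fm ?e) = Fo (Cod A ?m)" using vf_E(1)[OF F e(1)] c by simp
  have r1: "Comp C (Fm ?m) (Idm C (Fo (Cod A ?m))) = Fm ?m" using CC(9)[OF vfD(3)[OF F m(2)]] dm by simp
  have r2: "Comp C (Fm ?e) (Idm C (Fo (Cod A ?m))) = Fm ?e" using CC(9)[OF vfD(3)[OF F e(2)]] de by simp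
  have "Fm (Comp A ?e ?m) = Comp C (Fm (up_e A E M (Comp A (up_e A E M ?e) (up_m A E M ?m))))
            (Comp C (Fm ?m) (Fm (lo_m A E M (Comp A (lo_m A E M ?e) (lo_e A E M ?m)))))"
    using vfD(6)[OF F m(2) e(2) c] .
  thus "Fm f = Comp C (Fm (up_e A E M f)) (Fm (lo_m A E M f))"
    using E_fac(1)[OF e(1)] M_fac(2)[OF m(1)] fe lme lem ii lmi Fi r1 by simp
  have "Fm (Comp A ?e ?m) = Comp C (Fm (up_m A E M (Comp A (up_e A E M ?e) (up_m A E M ?m))))
            (Comp C (Fm ?e) (Fm (lo_e A E M (Comp A (lo_m A E M ?e) (lo_e A E M ?m)))))"
    using vfD(7)[OF F m(2) e(2) c] .
  thus "Fm f = Comp C (Fm (up_m A E M f)) (Fm (lo_e A E M f))"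
    using E_fac(1)[OF e(1)] M_fac(2)[OF m(1)] fe lme lem ii lei Fi r2 by simp
qed

end



context vctx begin

lemma vf_cov: assumes F: "var_functor A E M C Fo Fm"
  shows "cov_functor_on A E C Fo (restrict Fm E)"
  unfolding cov_functor_on_def
proof (intro conjI ballI impI)
  fix x assume x: "x \<in> Obj A"
  show "Fo x \<in> Obj C" using vfD(1)[OF F x] .
  show "restrict Fm E (Idm A x) = Idm C (Fo x)" using vfD(2)[OF F x] E_id[OF x] by simp
next
  fix f assume f: "f \<in> E"
  show "restrict Fm E f \<in> Mor C" "Dom C (restrict Fm E f) = Fo (Dom A f)"
     "Cod C (restrict Fm E f) = Fo (Cod A f)"
    using f vfD(3)[OF F E_mor[OF f]] vf_E[OF F f] by auto
next
  fix f g assume f: "f \<in> E" and g: "g \<in> E" and c: "Cod A f = Dom A g"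
  have fm: "f \<in> Mor A" and gm: "g \<in> Mor A" using f g E_mor by auto
  have gf: "Comp A g f \<in> E" using E_comp f g c .
  have 1: "Comp A g (Idm A (Cod A f)) = g" using A(9)[OF gm] c by simp
  have 2: "Comp A (Idm A (Cod A f)) f = f" using A(10)[OF fm] .
  have 3: "Comp C (Fm f) (Idm C (Fo (Dom A f))) = Fm f"
    using CC(9)[OF vfD(3)[OF F fm]] vf_E(1)[OF F f] by simp
  have "Fm (Comp A g f) = Comp C (Fm g) (Fm f)"
    using vfD(6)[OF F fm gm c] E_fac[OF f] E_fac[OF g] c 1 2 3 vfD(2)[OF F A(1)[OF fm]] by simp
  thus "restrict Fm E (Comp A g f) = Comp C (restrict Fm E g) (restrict Fm E f)"
    using f g gf by simp
qed

lemma vf_contra: assumes F: "var_functor A E M C Fo Fm"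
  shows "contra_functor_on A M C Fo (restrict Fm M)"
  unfolding contra_functor_on_def
proof (intro conjI ballI impI)
  fix x assume x: "x \<in> Obj A"
  show "Fo x \<in> Obj C" using vfD(1)[OF F x] .
  show "restrict Fm M (Idm A x) = Idm C (Fo x)" using vfD(2)[OF F x] M_id[OF x] by simp
next
  fix f assume f: "f \<in> M"
  show "restrict Fm M f \<in> Mor C" "Dom C (restrict Fm M f) = Fo (Cod A f)"
     "Cod C (restrict Fm M f) = Fo (Dom A f)"
    using f vfD(3)[OF F M_mor[OF f]] vf_M[OF F f] by auto
next
  fix f g assume f: "f \<in> M" and g: "g \<in> M" and c: "Cod A f = Dom A g"
  have fm: "f \<in> Mor A" and gm: "g \<in> Mor A" using f g M_mor by auto
  have gf: "Comp A g f \<in> M" using M_comp f g c .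
  have 1: "Comp A g (Idm A (Cod A f)) = g" using A(9)[OF gm] c by simp
  have 2: "Comp A (Idm A (Dom A g)) f = f" using A(10)[OF fm] c by simp
  have 3: "Comp C (Fm g) (Idm C (Fo (Cod A g))) = Fm g"
    using CC(9)[OF vfD(3)[OF F gm]] vf_M(1)[OF F g] by simp
  have "Fm (Comp A g f) = Comp C (Fm f) (Fm g)"
    using vfD(7)[OF F fm gm c] M_fac[OF f] M_fac[OF g] c 1 2 3 vfD(2)[OF F A(2)[OF gm]] by simp
  thus "restrict Fm M (Comp A g f) = Comp C (restrict Fm M f) (restrict Fm M g)"
    using f g gf by simp
qed

lemma vf_compat: assumes F: "var_functor A E M C Fo Fm"
  shows "compatible_pair A E M C Fo (restrict Fm E) (restrict Fm M)"
  unfolding compatible_pair_def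
  using vf_cov[OF F] vf_contra[OF F] vf_decomp[OF F] ue lm by simp

lemma vf_inj: assumes F: "var_functor A E M C Fo Fm" and F': "var_functor A E M C Fo Fm'"
  and ex: "Fm \<in> extensional (Mor A)" "Fm' \<in> extensional (Mor A)"
  and rE: "restrict Fm E = restrict Fm' E" and rM: "restrict Fm M = restrict Fm' M"
  shows "Fm = Fm'"
proof
  fix f show "Fm f = Fm' f"
  proof (cases "f \<in> Mor A")
    case True
    have "Fm (up_e A E M f) = Fm' (up_e A E M f)" using fun_cong[OF rE, of "up_e A E M f"] ue(1)[OF True] by simp
    moreover have "Fm (lo_m A E M f) = Fm' (lo_m A E M f)" using fun_cong[OF rM, of "lo_m A E M f"] lm(1)[OF True] by simp
    ultimately show ?thesis using vf_decomp(1)[OF F True] vf_decomp(1)[OF F' True] by simp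
  next
    case False thus ?thesis using ex by (simp add: extensional_def)
  qed
qed

end



context vctx begin

lemma cpD: assumes "compatible_pair A E M C Fo G H"
  shows "x \<in> Obj A \<Longrightarrow> Fo x \<in> Obj C"
    and "x \<in> Obj A \<Longrightarrow> G (Idm A x) = Idm C (Fo x)"
    and "x \<in> Obj A \<Longrightarrow> H (Idm A x) = Idm C (Fo x)"
    and "f \<in> E \<Longrightarrow> G f \<in> Mor C" and "f \<in> E \<Longrightarrow> Dom C (G f) = Fo (Dom A f)"
    and "f \<in> E \<Longrightarrow> Cod C (G f) = Fo (Cod A f)"
    and "f \<in> M \<Longrightarrow> H f \<in> Mor C" and "f \<in> M \<Longrightarrow> Dom C (H f) = Fo (Cod A f)"
    and "f \<in> M \<Longrightarrow> Cod C (H f) = Fo (Dom A f)"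
    and "f \<in> E \<Longrightarrow> g \<in> E \<Longrightarrow> Cod A f = Dom A g \<Longrightarrow> G (Comp A g f) = Comp C (G g) (G f)"
    and "f \<in> M \<Longrightarrow> g \<in> M \<Longrightarrow> Cod A f = Dom A g \<Longrightarrow> H (Comp A g f) = Comp C (H f) (H g)"
    and "f \<in> Mor A \<Longrightarrow> Comp C (G (up_e A E M f)) (H (lo_m A E M f)) =
                 Comp C (H (up_m A E M f)) (G (lo_e A E M f))"
  using assms unfolding compatible_pair_def cov_functor_on_def contra_functor_on_def by blast+

definition ext :: "('m \<Rightarrow> 'n) \<Rightarrow> ('m \<Rightarrow> 'n) \<Rightarrow> 'm \<Rightarrow> 'n" where
  "ext G H = (\<lambda>f. if f \<in> Mor A then Comp C (G (up_e A E M f)) (H (lo_m A E M f)) else undefined)"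

context
  fixes Fo G H assumes P: "compatible_pair A E M C Fo G H"
begin

lemma ext_E: assumes e: "e \<in> E" shows "ext G H e = G e"
  using CC(9)[OF cpD(4)[OF P e]] cpD(5)[OF P e] e E_fac[of e] E_mor[of e] cpD(3,4,5)[OF P] A(1) CC(9) unfolding ext_def by simp

lemma ext_M: assumes m: "m \<in> M" shows "ext G H m = H m"
  using CC(10)[OF cpD(7)[OF P m]] cpD(9)[OF P m] m M_fac[of m] M_mor[of m] cpD(2,7,9)[OF P] A(1) CC(10) unfolding ext_def by simp

lemma ext_alt: "f \<in> Mor A \<Longrightarrow> ext G H f = Comp C (H (up_m A E M f)) (G (lo_e A E M f))"
  using cpD(12)[OF P] unfolding ext_def by simp

lemma ext_typ: assumes f: "f \<in> Mor A"
  shows "ext G H f \<in> Mor C" "Dom C (ext G H f) = Fo (f_s A E M f)" "Cod C (ext G H f) = Fo (f_t A E M f)"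
proof -
  have c: "Cod C (H (lo_m A E M f)) = Dom C (G (up_e A E M f))"
    using cpD(9,5)[OF P] ue(1)[OF f] lm(1)[OF f] ue_dom[OF f] lm_dom[OF f] by simp
  show "ext G H f \<in> Mor C" "Dom C (ext G H f) = Fo (f_s A E M f)" "Cod C (ext G H f) = Fo (f_t A E M f)"
    using CC(6,7,8)[OF cpD(7)[OF P lm(1)[OF f]] cpD(4)[OF P ue(1)[OF f]] c] f
      cpD(8)[OF P lm(1)[OF f]] cpD(6)[OF P ue(1)[OF f]]
    unfolding ext_def f_s_def f_t_def by simp_all
qed

end
end



context vctx begin

lemma up_comp: assumes f: "f \<in> Mor A" and g: "g \<in> Mor A" and c: "Cod A f = Dom A g"
  defines "k \<equiv> Comp A (up_e A E M g) (up_m A E M f)"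
  shows "k \<in> Mor A" "Dom A (up_e A E M k) = Cod A (up_e A E M f)"
    "Cod A (up_m A E M k) = Dom A (up_m A E M g)"
    "up_e A E M (Comp A g f) = Comp A (up_e A E M k) (up_e A E M f)"
    "up_m A E M (Comp A g f) = Comp A (up_m A E M g) (up_m A E M k)"
proof -
  let ?e1 = "up_e A E M f" and ?m1 = "up_m A E M f" and ?e2 = "up_e A E M g" and ?m2 = "up_m A E M g"
  have e1: "?e1 \<in> E" "?e1 \<in> Mor A" and m1: "?m1 \<in> M" "?m1 \<in> Mor A"
   and e2: "?e2 \<in> E" "?e2 \<in> Mor A" and m2: "?m2 \<in> M" "?m2 \<in> Mor A"
    using ue(1,2) f g E_mor M_mor by auto
  have c1: "Cod A ?m1 = Dom A ?e2" using ue_dom f g c by simp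
  show km: "k \<in> Mor A" unfolding k_def using A(6)[OF m1(2) e2(2) c1] .
  let ?ek = "up_e A E M k" and ?mk = "up_m A E M k"
  have ek: "?ek \<in> E" "?ek \<in> Mor A" and mk: "?mk \<in> M" "?mk \<in> Mor A"
    using ue(1,2) km E_mor M_mor by auto
  have dk: "Dom A k = Cod A ?e1" "Cod A k = Dom A ?m2"
    unfolding k_def using A(7,8)[OF m1(2) e2(2) c1] ue(3) f g by auto
  show dek: "Dom A ?ek = Cod A ?e1" using ue_dom(1)[OF km] dk by simp
  show cmk: "Cod A ?mk = Dom A ?m2" using ue_dom(2)[OF km] dk by simp
  have cc: "Cod A ?ek = Dom A ?mk" using ue(3)[OF km] .
  have "Comp A g f = Comp A (Comp A ?m2 ?e2) (Comp A ?m1 ?e1)" using ue(4) f g by simp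
  also have "\<dots> = Comp A ?m2 (Comp A k ?e1)"
    unfolding k_def by (rule assoc4[OF cA e1(2) m1(2) e2(2) m2(2)]) (use ue(3) f g c1 in auto)
  also have "\<dots> = Comp A ?m2 (Comp A (Comp A ?mk ?ek) ?e1)" using ue(4)[OF km] by simp
  also have "\<dots> = Comp A (Comp A ?m2 ?mk) (Comp A ?ek ?e1)"
    by (rule assoc4[OF cA e1(2) ek(2) mk(2) m2(2), symmetric]) (use dek cc cmk in auto)
  finally have gf: "Comp A g f = Comp A (Comp A ?m2 ?mk) (Comp A ?ek ?e1)" .
  have E1: "Comp A ?ek ?e1 \<in> E" using E_comp[OF e1(1) ek(1)] dek by simp
  have M1: "Comp A ?m2 ?mk \<in> M" using M_comp[OF mk(1) m2(1) cmk] .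
  have C1: "Cod A (Comp A ?ek ?e1) = Dom A (Comp A ?m2 ?mk)"
    using A(8)[OF e1(2) ek(2)] A(7)[OF mk(2) m2(2) cmk] dek cc by simp
  show "up_e A E M (Comp A g f) = Comp A ?ek ?e1" "up_m A E M (Comp A g f) = Comp A ?m2 ?mk"
    using ue_uniq[OF E1 M1 C1] gf by simp_all
qed

lemma lo_comp: assumes f: "f \<in> Mor A" and g: "g \<in> Mor A" and c: "Cod A f = Dom A g"
  defines "k \<equiv> Comp A (lo_m A E M g) (lo_e A E M f)"
  shows "k \<in> Mor A" "Dom A (lo_m A E M k) = Cod A (lo_m A E M f)"
    "Cod A (lo_e A E M k) = Dom A (lo_e A E M g)"
    "lo_m A E M (Comp A g f) = Comp A (lo_m A E M k) (lo_m A E M f)"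
    "lo_e A E M (Comp A g f) = Comp A (lo_e A E M g) (lo_e A E M k)"
proof -
  let ?e1 = "lo_m A E M f" and ?m1 = "lo_e A E M f" and ?e2 = "lo_m A E M g" and ?m2 = "lo_e A E M g"
  have e1: "?e1 \<in> M" "?e1 \<in> Mor A" and m1: "?m1 \<in> E" "?m1 \<in> Mor A"
   and e2: "?e2 \<in> M" "?e2 \<in> Mor A" and m2: "?m2 \<in> E" "?m2 \<in> Mor A"
    using lm(1,2) f g E_mor M_mor by auto
  have c1: "Cod A ?m1 = Dom A ?e2" using lm_dom f g c by simp
  show km: "k \<in> Mor A" unfolding k_def using A(6)[OF m1(2) e2(2) c1] .
  let ?ek = "lo_m A E M k" and ?mk = "lo_e A E M k"
  have ek: "?ek \<in> M" "?ek \<in> Mor A" and mk: "?mk \<in> E" "?mk \<in> Mor A"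
    using lm(1,2) km E_mor M_mor by auto
  have dk: "Dom A k = Cod A ?e1" "Cod A k = Dom A ?m2"
    unfolding k_def using A(7,8)[OF m1(2) e2(2) c1] lm(3) f g by auto
  show dek: "Dom A ?ek = Cod A ?e1" using lm_dom(1)[OF km] dk by simp
  show cmk: "Cod A ?mk = Dom A ?m2" using lm_dom(2)[OF km] dk by simp
  have cc: "Cod A ?ek = Dom A ?mk" using lm(3)[OF km] .
  have "Comp A g f = Comp A (Comp A ?m2 ?e2) (Comp A ?m1 ?e1)" using lm(4) f g by simp
  also have "\<dots> = Comp A ?m2 (Comp A k ?e1)"
    unfolding k_def by (rule assoc4[OF cA e1(2) m1(2) e2(2) m2(2)]) (use lm(3) f g c1 in auto)
  also have "\<dots> = Comp A ?m2 (Comp A (Comp A ?mk ?ek) ?e1)" using lm(4)[OF km] by simp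
  also have "\<dots> = Comp A (Comp A ?m2 ?mk) (Comp A ?ek ?e1)"
    by (rule assoc4[OF cA e1(2) ek(2) mk(2) m2(2), symmetric]) (use dek cc cmk in auto)
  finally have gf: "Comp A g f = Comp A (Comp A ?m2 ?mk) (Comp A ?ek ?e1)" .
  have E1: "Comp A ?ek ?e1 \<in> M" using M_comp[OF e1(1) ek(1)] dek by simp
  have M1: "Comp A ?m2 ?mk \<in> E" using E_comp[OF mk(1) m2(1) cmk] .
  have C1: "Cod A (Comp A ?ek ?e1) = Dom A (Comp A ?m2 ?mk)"
    using A(8)[OF e1(2) ek(2)] A(7)[OF mk(2) m2(2) cmk] dek cc by simp
  show "lo_m A E M (Comp A g f) = Comp A ?ek ?e1" "lo_e A E M (Comp A g f) = Comp A ?m2 ?mk"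
    using lm_uniq[OF E1 M1 C1] gf by simp_all
qed

end



context vctx begin
context
  fixes Fo G H assumes P: "compatible_pair A E M C Fo G H"
begin

lemma ext_comp: assumes f: "f \<in> Mor A" and g: "g \<in> Mor A" and c: "Cod A f = Dom A g"
  shows "ext G H (Comp A g f) =
          Comp C (ext G H (up_e A E M (Comp A (up_e A E M g) (up_m A E M f))))
            (Comp C (ext G H f) (ext G H (lo_m A E M (Comp A (lo_m A E M g) (lo_e A E M f)))))"
    "ext G H (Comp A g f) =
          Comp C (ext G H (up_m A E M (Comp A (up_e A E M g) (up_m A E M f))))
            (Comp C (ext G H g) (ext G H (lo_e A E M (Comp A (lo_m A E M g) (lo_e A E M f)))))"
proof -
  define k where "k = Comp A (up_e A E M g) (up_m A E M f)"
  define l where "l = Comp A (lo_m A E M g) (lo_e A E M f)"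
  note U = up_comp[OF f g c, folded k_def]
  note L = lo_comp[OF f g c, folded l_def]
  have gf: "Comp A g f \<in> Mor A" using A(6)[OF f g c] .
  let ?ek = "up_e A E M k" and ?mk = "up_m A E M k" and ?pl = "lo_m A E M l" and ?ql = "lo_e A E M l"
  let ?e1 = "up_e A E M f" and ?m2 = "up_m A E M g" and ?p1 = "lo_m A E M f" and ?q2 = "lo_e A E M g"
  have ek: "?ek \<in> E" "?ek \<in> Mor A" and mk: "?mk \<in> M" "?mk \<in> Mor A"
    and pl: "?pl \<in> M" "?pl \<in> Mor A" and ql: "?ql \<in> E" "?ql \<in> Mor A"
    using ue(1,2)[OF U(1)] lm(1,2)[OF L(1)] E_mor M_mor by auto
  have e1: "?e1 \<in> E" "?e1 \<in> Mor A" and m2: "?m2 \<in> M" "?m2 \<in> Mor A"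
    and p1: "?p1 \<in> M" "?p1 \<in> Mor A" and q2: "?q2 \<in> E" "?q2 \<in> Mor A"
    using ue(1,2) lm(1,2) f g E_mor M_mor by auto
  note T = cpD(4,5,6,7,8,9)[OF P]
  have "ext G H (Comp A g f) = Comp C (G (Comp A ?ek ?e1)) (H (Comp A ?pl ?p1))"
    using gf U(4) L(4) unfolding ext_def by simp
  also have "\<dots> = Comp C (Comp C (G ?ek) (G ?e1)) (Comp C (H ?p1) (H ?pl))"
    using cpD(10)[OF P e1(1) ek(1)] cpD(11)[OF P p1(1) pl(1)] U(2) L(2) by simp
  also have "\<dots> = Comp C (G ?ek) (Comp C (Comp C (G ?e1) (H ?p1)) (H ?pl))"
    by (rule assoc4[OF cC]) (use T e1 ek p1 pl U(2) L(2) ue_dom[OF f] lm_dom[OF f] lm_dom[OF L(1)] in auto)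
  also have "\<dots> = Comp C (ext G H ?ek) (Comp C (ext G H f) (ext G H ?pl))"
    using ext_E[OF P ek(1)] ext_M[OF P pl(1)] f unfolding ext_def by simp
  finally show "ext G H (Comp A g f) = Comp C (ext G H ?ek) (Comp C (ext G H f) (ext G H ?pl))" .
  have "ext G H (Comp A g f) = Comp C (H (Comp A ?m2 ?mk)) (G (Comp A ?q2 ?ql))"
    using gf U(5) L(5) ext_alt[OF P gf] by simp
  also have "\<dots> = Comp C (Comp C (H ?mk) (H ?m2)) (Comp C (G ?q2) (G ?ql))"
    using cpD(10)[OF P ql(1) q2(1)] cpD(11)[OF P mk(1) m2(1)] U(3) L(3) by simp
  also have "\<dots> = Comp C (H ?mk) (Comp C (Comp C (H ?m2) (G ?q2)) (G ?ql))"
    by (rule assoc4[OF cC]) (use T q2 ql m2 mk U(3) L(3) ue_dom[OF g] lm_dom[OF g] ue_dom[OF U(1)] in auto)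
  also have "\<dots> = Comp C (ext G H ?mk) (Comp C (ext G H g) (ext G H ?ql))"
    using ext_M[OF P mk(1)] ext_E[OF P ql(1)] ext_alt[OF P g] by simp
  finally show "ext G H (Comp A g f) = Comp C (ext G H ?mk) (Comp C (ext G H g) (ext G H ?ql))" .
qed

lemma ext_vf: "var_functor A E M C Fo (ext G H)"
  unfolding var_functor_def
  using cpD(1,2)[OF P] ext_E[OF P] E_id ext_typ[OF P] ext_comp by simp

end
end


theorem mainTheorem2:
  fixes A :: "('o, 'm) cat" and C :: "('p, 'n) cat" and E M :: "'m set"
  assumes "is_category A" and "is_category C" and "variance A E M"
  shows "(\<forall>Fo Fm. var_functor A E M C Fo Fm \<longrightarrow>
            cov_functor_on A E C Fo (restrict Fm E) \<and>
            contra_functor_on A M C Fo (restrict Fm M) \<and>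
            compatible_pair A E M C Fo (restrict Fm E) (restrict Fm M)) \<and>
         bij_betw (restrict_pair E M) (var_functors A E M C) (compatible_pairs A E M C)"
proof -
  interpret vctx A C E M using assms by unfold_locales
  have inj: "inj_on (restrict_pair E M) (var_functors A E M C)"
  proof (rule inj_onI)
    fix F F' assume F: "F \<in> var_functors A E M C" and F': "F' \<in> var_functors A E M C"
      and eq: "restrict_pair E M F = restrict_pair E M F'"
    obtain Fo Fm where Fd: "F = (Fo, Fm)" by (cases F)
    obtain Fo' Fm' where Fd': "F' = (Fo', Fm')" by (cases F')
    have o: "Fo = Fo'" and rE: "restrict Fm E = restrict Fm' E" and rM: "restrict Fm M = restrict Fm' M"
      using eq unfolding Fd Fd' restrict_pair_def by auto
    have "Fm = Fm'"
      by (rule vf_inj[OF _ _ _ _ rE rM]) (use F F' o in \<open>auto simp: Fd Fd' var_functors_def\<close>)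
    thus "F = F'" using o Fd Fd' by simp
  qed
  have img: "restrict_pair E M ` var_functors A E M C = compatible_pairs A E M C"
  proof
    show "restrict_pair E M ` var_functors A E M C \<subseteq> compatible_pairs A E M C"
      by (auto simp: var_functors_def compatible_pairs_def restrict_pair_def vf_compat)
  next
    show "compatible_pairs A E M C \<subseteq> restrict_pair E M ` var_functors A E M C"
    proof
      fix X assume X: "X \<in> compatible_pairs A E M C"
      obtain Fo G H where Xd: "X = (Fo, G, H)" by (cases X)
      have P: "compatible_pair A E M C Fo G H" and ex: "Fo \<in> extensional (Obj A)"
        "G \<in> extensional E" "H \<in> extensional M"
        using X unfolding Xd compatible_pairs_def by auto
      have rE: "restrict (ext G H) E = G"
        using ext_E[OF P] ex(2) by (auto simp: fun_eq_iff extensional_def)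
      have rM: "restrict (ext G H) M = H"
        using ext_M[OF P] ex(3) by (auto simp: fun_eq_iff extensional_def)
      have "(Fo, ext G H) \<in> var_functors A E M C"
        using ext_vf[OF P] ex(1) unfolding var_functors_def by (auto simp: ext_def extensional_def)
      moreover have "X = restrict_pair E M (Fo, ext G H)"
        using rE rM Xd by (simp add: restrict_pair_def)
      ultimately show "X \<in> restrict_pair E M ` var_functors A E M C" by blast
    qed
  qed
  show ?thesis
    using vf_cov vf_contra vf_compat bij_betw_imageI[OF inj img] by blast
qed

end
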